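(* Let $p=(p_N)_{N\subseteq\mathbf{U}}$ be a random partition that is positive (i.e., $p_N(\pi)>0$ for all $N\subseteq\mathbf{U}$ and $\pi\in\Pi(N)$) and generates the potential for TU games (i.e., $\mathrm{E}_p(v)=\mathrm{Pot}(v)$ for every $N\subseteq\mathbf{U}$ and every TU game $v$ on $N$, viewed as a TUX game). A restriction operator $r$ is path independent, preserves null games, and satisfies $\mathrm{Pot}^r=\mathrm{E}_p$ (on all TUX games) if and only if $r=r^p$, where $r^p$ is the restriction operator defined by $$w^{r^p}_{-i}(S,\pi)=\frac{n}{n-s}\sum_{B\in\pi\cup\{\emptyset\}}\frac{p_N(\{S\}\cup\pi_{+i\leadsto B})}{p_{N\setminus\{i\}}(\{S\}\cup\pi)}\,w(S,\pi_{+i\leadsto B})$$ for all $N\subseteq\mathbf{U}$, $w\in\mathbb{W}(N)$, $i\in N$, $(S,\pi)\in\mathcal{E}(N\setminus\{i\})$.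
   Context: $\mathbf{U}$ is a finite set of players; cardinalities of sets $N,S,T,B$ are $n,s,t,b$. $\Pi(N)$ is the set of partitions of $N$ (with $\Pi(\emptyset)=\{\emptyset\}$). A random partition is a family $p=(p_N)_{N\subseteq\mathbf{U}}$ with $p_N$ a probability distribution on $\Pi(N)$. For $\pi\in\Pi(N\setminus\{i\})$ and $B\in\pi$, $\pi_{+i\leadsto B}=(\pi\setminus\{B\})\cup\{B\cup\{i\}\}$ and $\pi_{+i\leadsto\emptyset}=\pi\cup\{\{i\}\}$. A TU game on $N$ is $v:2^N\to\mathbb{R}$ with $v(\emptyset)=0$; its subgame $v_{-i}$ is its restriction to $2^{N\setminus\{i\}}$. The potential $\mathrm{Pot}$ for TU games is the unique map with $\mathrm{Pot}$ of the game on $\emptyset$ equal to $0$ and $\sum_{i\in N}[\mathrm{Pot}(v)-\mathrm{Pot}(v_{-i})]=v(N)$; explicitly $\mathrm{Pot}(v)=\sum_{\emptyset\neq S\subseteq N}\frac{(s-1)!(n-s)!}{n!}v(S)$. The embedded coalitions of $N$ are $\mathcal{E}(N)=\{(S,\pi):S\subseteq N,\ \pi\in\Pi(N\setminus S)\}$. A TUX game (partition function game) on $N$ is $w:\mathcal{E}(N)\to\mathbb{R}$ with $w(\emptyset,\pi)=0$ for all $\pi$; $\mathbb{W}(N)$ is the set of these. A TU game $v$ is identified with the TUX game $w(S,\pi)=v(S)$. The null game $\mathbf{0}^N$ is identically $0$. For a random partition $p$, $\mathrm{E}_p(w)=\sum_{\pi\in\Pi(N)}p_N(\pi)\sum_{S\in\pi}w(S,\pi\setminus\{S\})$.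 A restriction operator $r$ assigns to every $N\subseteq\mathbf{U}$, $w\in\mathbb{W}(N)$, $i\in N$ a game $w^r_{-i}\in\mathbb{W}(N\setminus\{i\})$ such that $w^r_{-i}(S,\pi)$ depends only on the values $w(S,\pi_{+i\leadsto B})$, $B\in\pi\cup\{\emptyset\}$ (i.e., if $w,w'$ agree on these, then $w^r_{-i}(S,\pi)=w'^r_{-i}(S,\pi)$). It is path independent if $(w^r_{-i})^r_{-j}=(w^r_{-j})^r_{-i}$ for all $w$ and distinct $i,j$ (so $w^r_{-T}$ is well defined for $T\subseteq N$); it preserves null games if $(\mathbf{0}^N)^r_{-i}=\mathbf{0}^{N\setminus\{i\}}$. For path independent $r$, the $r$-potential $\mathrm{Pot}^r$ is the unique map on TUX games with $\mathrm{Pot}^r(\mathbf{0}^\emptyset)=0$ and $\sum_{i\in N}[\mathrm{Pot}^r(w)-\mathrm{Pot}^r(w^r_{-i})]=w(N,\emptyset)$ for all $w\in\mathbb{W}(N)$; equivalently $\mathrm{Pot}^r(w)=\mathrm{Pot}(v^r_w)$ with $v^r_w(S)=w^r_{-(N\setminus S)}(S,\emptyset)$. *)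

theory Defs
  imports Complex_Main "HOL-Library.Disjoint_Sets"
begin

text \<open>Partitions of N: the library notion partition_on (blocks nonempty, pairwise disjoint,
  union N); partition_on {} {} holds, so Pi({}) = {{}}.\<close>

type_synonym 'a tux = "'a set \<Rightarrow> 'a set set \<Rightarrow> real"
type_synonym 'a restr_op = "'a set \<Rightarrow> 'a tux \<Rightarrow> 'a \<Rightarrow> 'a tux"

definition random_partition :: "'a set \<Rightarrow> ('a set \<Rightarrow> 'a set set \<Rightarrow> real) \<Rightarrow> bool" where
  "random_partition U p \<longleftrightarrow> (\<forall>N. N \<subseteq> U \<longrightarrow>
      (\<forall>\<pi>. partition_on N \<pi> \<longrightarrow> p N \<pi> \<ge> 0) \<and> (\<Sum>\<pi>\<in>{\<pi>. partition_on N \<pi>}. p N \<pi>) = 1)"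

definition positive_rp :: "'a set \<Rightarrow> ('a set \<Rightarrow> 'a set set \<Rightarrow> real) \<Rightarrow> bool" where
  "positive_rp U p \<longleftrightarrow> (\<forall>N \<pi>. N \<subseteq> U \<longrightarrow> partition_on N \<pi> \<longrightarrow> p N \<pi> > 0)"

definition emb :: "'a set \<Rightarrow> 'a set \<Rightarrow> 'a set set \<Rightarrow> bool" where
  "emb N S \<pi> \<longleftrightarrow> S \<subseteq> N \<and> partition_on (N - S) \<pi>"

text \<open>TUX games on N (values outside the embedded coalitions of N are irrelevant).\<close>
definition tux_game :: "'a set \<Rightarrow> 'a tux \<Rightarrow> bool" where
  "tux_game N w \<longleftrightarrow> (\<forall>\<pi>. partition_on N \<pi> \<longrightarrow> w {} \<pi> = 0)"

definition tu_game :: "'a set \<Rightarrow> ('a set \<Rightarrow> real) \<Rightarrow> bool" where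
  "tu_game N v \<longleftrightarrow> v {} = 0"

text \<open>pi_{+i ~> B}; B = {} means i forms a singleton block.\<close>
definition add_to :: "'a \<Rightarrow> 'a set \<Rightarrow> 'a set set \<Rightarrow> 'a set set" where
  "add_to i B \<pi> = (if B = {} then insert {i} \<pi> else insert (B \<union> {i}) (\<pi> - {B}))"

definition Ep :: "('a set \<Rightarrow> 'a set set \<Rightarrow> real) \<Rightarrow> 'a set \<Rightarrow> 'a tux \<Rightarrow> real" where
  "Ep p N w = (\<Sum>\<pi>\<in>{\<pi>. partition_on N \<pi>}. p N \<pi> * (\<Sum>S\<in>\<pi>. w S (\<pi> - {S})))"

definition Pot :: "'a set \<Rightarrow> ('a set \<Rightarrow> real) \<Rightarrow> real" where
  "Pot N v = (\<Sum>S\<in>{S. S \<subseteq> N \<and> S \<noteq> {}}.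
      fact (card S - 1) * fact (card N - card S) / fact (card N) * v S)"

definition restriction_operator :: "'a set \<Rightarrow> 'a restr_op \<Rightarrow> bool" where
  "restriction_operator U r \<longleftrightarrow> (\<forall>N w i. N \<subseteq> U \<longrightarrow> tux_game N w \<longrightarrow> i \<in> N \<longrightarrow>
      tux_game (N - {i}) (r N w i) \<and>
      (\<forall>w' S \<pi>. tux_game N w' \<longrightarrow> emb (N - {i}) S \<pi> \<longrightarrow>
         (\<forall>B \<in> insert {} \<pi>. w S (add_to i B \<pi>) = w' S (add_to i B \<pi>)) \<longrightarrow>
         r N w i S \<pi> = r N w' i S \<pi>))"

definition path_independent :: "'a set \<Rightarrow> 'a restr_op \<Rightarrow> bool" where
  "path_independent U r \<longleftrightarrow> (\<forall>N w i j S \<pi>. N \<subseteq> U \<longrightarrow> tux_game N w \<longrightarrow> i \<in> N \<longrightarrow> j \<in> N \<longrightarrow>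
      i \<noteq> j \<longrightarrow> emb (N - {i} - {j}) S \<pi> \<longrightarrow>
      r (N - {i}) (r N w i) j S \<pi> = r (N - {j}) (r N w j) i S \<pi>)"

definition preserves_null :: "'a set \<Rightarrow> 'a restr_op \<Rightarrow> bool" where
  "preserves_null U r \<longleftrightarrow> (\<forall>N i S \<pi>. N \<subseteq> U \<longrightarrow> i \<in> N \<longrightarrow> emb (N - {i}) S \<pi> \<longrightarrow>
      r N (\<lambda>_ _. 0) i S \<pi> = 0)"

text \<open>r-potential, defined by its defining recursion
  sum_{i in N} [Pot^r(w) - Pot^r(w^r_{-i})] = w(N, {}), Pot^r = 0 on the empty player set.\<close>
function potr :: "'a restr_op \<Rightarrow> 'a set \<Rightarrow> 'a tux \<Rightarrow> real" where
  "potr r N w = (if N = {} \<or> infinite N then 0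
     else (w N {} + (\<Sum>i\<in>N. potr r (N - {i}) (r N w i))) / real (card N))"
  by pat_completeness auto
termination
  by (relation "measure (\<lambda>(r, N, w). card N)") (auto simp: card_gt_0_iff)

declare potr.simps [simp del]

definition rp :: "('a set \<Rightarrow> 'a set set \<Rightarrow> real) \<Rightarrow> 'a restr_op" where
  "rp p N w i S \<pi> = real (card N) / (real (card N) - real (card S)) *
     (\<Sum>B\<in>insert {} \<pi>. p N (insert S (add_to i B \<pi>)) / p (N - {i}) (insert S \<pi>)
        * w S (add_to i B \<pi>))"

end

theory Submission
  imports Defs
begin


lemma L1: "partition_on N \<pi> \<Longrightarrow> T \<in> \<pi> \<Longrightarrow> partition_on (N - T) (\<pi> - {T})"
proof -
  assume P: "partition_on N \<pi>" and T: "T \<in> \<pi>"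
  have d: "disjnt T (\<Union>(\<pi> - {T}))"
    using P T unfolding partition_on_def disjoint_def disjnt_def by blast
  have "\<pi> = insert T (\<pi> - {T})" using T by blast
  then have "partition_on N (insert T (\<pi> - {T}))" using P by simp
  then show ?thesis using partition_on_insert[OF d] by blast
qed

lemma L2: "S \<noteq> {} \<Longrightarrow> S \<subseteq> N \<Longrightarrow> partition_on (N - S) \<sigma> \<Longrightarrow> partition_on N (insert S \<sigma>)"
proof -
  assume a: "S \<noteq> {}" "S \<subseteq> N" "partition_on (N - S) \<sigma>"
  have d: "disjnt S (\<Union>\<sigma>)" using partition_onD1[OF a(3)] by (auto simp: disjnt_def)
  show ?thesis using partition_on_insert[OF d] a by blast
qed

lemma add_to_eq: "{} \<notin> \<sigma> \<Longrightarrow> add_to i B \<sigma> = insert (B \<union> {i}) (\<sigma> - {B})"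
  by (auto simp: add_to_def)

lemma L3: "partition_on M \<sigma> \<Longrightarrow> i \<notin> M \<Longrightarrow> B \<in> insert {} \<sigma> \<Longrightarrow>
    partition_on (insert i M) (add_to i B \<sigma>)"
proof -
  assume P: "partition_on M \<sigma>" and i: "i \<notin> M" and B: "B \<in> insert {} \<sigma>"
  have e: "{} \<notin> \<sigma>" using P by (simp add: partition_on_def)
  have U: "\<Union>\<sigma> = M" using P by (simp add: partition_on_def)
  have dis: "disjoint \<sigma>" using P by (simp add: partition_on_def)
  have d: "disjnt (B \<union> {i}) (\<Union>(\<sigma> - {B}))"
    using B dis i U unfolding disjoint_def disjnt_def by blast
  have P2: "partition_on (M - B) (\<sigma> - {B})"
  proof (cases "B = {}")
    case True then show ?thesis using P e by simp
  next
    case False then show ?thesis using B L1[OF P] by auto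
  qed
  have BM: "B \<subseteq> M" using B U by blast
  have eq: "insert i M - (B \<union> {i}) = M - B" using i by blast
  show ?thesis unfolding add_to_eq[OF e]
    using partition_on_insert[OF d, of "insert i M"] P2 eq BM by auto
qed

definition rem :: "'a \<Rightarrow> 'a set set \<Rightarrow> 'a set set" where
  "rem i \<rho> = (\<lambda>b. b - {i}) ` \<rho> - {{}}"

lemma rem_add: "{} \<notin> \<sigma> \<Longrightarrow> i \<notin> \<Union>\<sigma> \<Longrightarrow> B \<in> insert {} \<sigma> \<Longrightarrow> rem i (add_to i B \<sigma>) = \<sigma>"
  unfolding add_to_eq rem_def
proof -
  assume a: "{} \<notin> \<sigma>" "i \<notin> \<Union>\<sigma>" "B \<in> insert {} \<sigma>"
  have "\<And>b. b \<in> \<sigma> \<Longrightarrow> b - {i} = b" using a(2) by blast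
  then have "(\<lambda>b. b - {i}) ` (\<sigma> - {B}) = \<sigma> - {B}" by (simp add: image_cong)
  moreover have "B \<union> {i} - {i} = B" using a by blast
  ultimately have "(\<lambda>b. b - {i}) ` insert (B \<union> {i}) (\<sigma> - {B}) = insert B (\<sigma> - {B})" by simp
  then show "(\<lambda>b. b - {i}) ` insert (B \<union> {i}) (\<sigma> - {B}) - {{}} = \<sigma>" using a by auto
qed

lemma blk: "{} \<notin> \<sigma> \<Longrightarrow> i \<notin> \<Union>\<sigma> \<Longrightarrow> {x \<in> add_to i B \<sigma>. i \<in> x} = {B \<union> {i}}"
  by (auto simp: add_to_eq)

lemma L5: "partition_on M \<sigma> \<Longrightarrow> partition_on M \<sigma>' \<Longrightarrow> i \<notin> M \<Longrightarrow> B \<in> insert {} \<sigma> \<Longrightarrow>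
   B' \<in> insert {} \<sigma>' \<Longrightarrow> add_to i B \<sigma> = add_to i B' \<sigma>' \<Longrightarrow> \<sigma> = \<sigma>' \<and> B = B'"
proof -
  assume a: "partition_on M \<sigma>" "partition_on M \<sigma>'" "i \<notin> M" "B \<in> insert {} \<sigma>"
     "B' \<in> insert {} \<sigma>'" "add_to i B \<sigma> = add_to i B' \<sigma>'"
  have e: "{} \<notin> \<sigma>" "{} \<notin> \<sigma>'" "i \<notin> \<Union>\<sigma>" "i \<notin> \<Union>\<sigma>'" using a by (auto simp: partition_on_def)
  have "\<sigma> = \<sigma>'" using rem_add[OF e(1,3) a(4)] rem_add[OF e(2,4) a(5)] a(6) by simp
  moreover have "{B \<union> {i}} = {B' \<union> {i}}" using blk[OF e(1,3), of B] blk[OF e(2,4), of B'] a(6) by simp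
  then have "B \<union> {i} = B' \<union> {i}" by simp
  then have "B = B'" using a(4,5) e(3,4) by blast
  ultimately show ?thesis by simp
qed

lemma L4: "partition_on (insert i M) \<rho> \<Longrightarrow> i \<notin> M \<Longrightarrow>
   \<exists>B. partition_on M (rem i \<rho>) \<and> B \<in> insert {} (rem i \<rho>) \<and> \<rho> = add_to i B (rem i \<rho>)"
proof -
  assume P: "partition_on (insert i M) \<rho>" and i: "i \<notin> M"
  obtain C where C: "C \<in> \<rho>" "i \<in> C" using P by (auto simp: partition_on_def)
  define B where "B = C - {i}"
  have dis: "disjoint \<rho>" and e: "{} \<notin> \<rho>" and U: "\<Union>\<rho> = insert i M" using P by (auto simp: partition_on_def)
  have oth: "\<And>D. D \<in> \<rho> \<Longrightarrow> D \<noteq> C \<Longrightarrow> D \<inter> C = {}" using dis C unfolding disjoint_def by blast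
  have P1: "partition_on (insert i M - C) (\<rho> - {C})" using L1[OF P C(1)] .
  have remeq: "rem i \<rho> = (if B = {} then \<rho> - {C} else insert B (\<rho> - {C}))"
  proof -
    have "\<And>D. D \<in> \<rho> - {C} \<Longrightarrow> D - {i} = D" using oth C(2) by blast
    then have "(\<lambda>b. b - {i}) ` (\<rho> - {C}) = \<rho> - {C}" by (simp add: image_cong)
    moreover have "\<rho> = insert C (\<rho> - {C})" using C by blast
    ultimately have "(\<lambda>b. b - {i}) ` \<rho> = insert B (\<rho> - {C})" unfolding B_def
      by (metis image_insert)
    then show ?thesis unfolding rem_def using e by auto
  qed
  show ?thesis
  proof (cases "B = {}")
    case True
    then have Ci: "C = {i}" using C B_def by blast
    have "insert i M - C = M" using Ci i by blast
    then have pm: "partition_on M (rem i \<rho>)" using P1 remeq True by simp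
    have "add_to i B (rem i \<rho>) = \<rho>" using True remeq Ci C by (auto simp: add_to_def)
    then show ?thesis using pm True by blast
  next
    case False
    have d: "disjnt B (\<Union>(\<rho> - {C}))" using oth unfolding B_def disjnt_def by blast
    have "insert i M - C = M - B" using i C unfolding B_def by blast
    moreover have "B \<subseteq> M" using C U i unfolding B_def by blast
    ultimately have pm: "partition_on M (insert B (\<rho> - {C}))"
      using partition_on_insert[OF d] P1 False by auto
    have Bn: "B \<notin> \<rho> - {C}" using oth False unfolding B_def by blast
    have "add_to i B (insert B (\<rho> - {C})) = insert (B \<union> {i}) (\<rho> - {C})"
      using False Bn by (auto simp: add_to_def)
    also have "B \<union> {i} = C" using C unfolding B_def by blast
    also have "insert C (\<rho> - {C}) = \<rho>" using C by blast
    finally show ?thesis using pm remeq False by auto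
  qed
qed


definition X :: "('a set \<Rightarrow> 'a set set \<Rightarrow> real) \<Rightarrow> 'a set \<Rightarrow> 'a set \<Rightarrow> 'a tux \<Rightarrow> real" where
  "X p S N G = (\<Sum>\<sigma>\<in>{\<sigma>. partition_on (N - S) \<sigma>}. p N (insert S \<sigma>) * G S \<sigma>)"

definition Y :: "('a set \<Rightarrow> 'a set set \<Rightarrow> real) \<Rightarrow> 'a set \<Rightarrow> 'a set \<Rightarrow> 'a tux \<Rightarrow> real" where
  "Y p T N G = (\<Sum>\<pi>\<in>{\<pi>. partition_on N \<pi> \<and> T \<in> \<pi>}. p N \<pi> * G T (\<pi> - {T}))"

lemma YX: "T \<noteq> {} \<Longrightarrow> T \<subseteq> N \<Longrightarrow> Y p T N G = X p T N G"
  unfolding X_def Y_def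
proof (rule sum.reindex_bij_witness[of _ "\<lambda>\<sigma>. insert T \<sigma>" "\<lambda>\<pi>. \<pi> - {T}"])
  assume T: "T \<noteq> {}" "T \<subseteq> N"
  fix \<pi> assume "\<pi> \<in> {\<pi>. partition_on N \<pi> \<and> T \<in> \<pi>}"
  then have a: "partition_on N \<pi>" "T \<in> \<pi>" by auto
  show "insert T (\<pi> - {T}) = \<pi>" using a by blast
  show "\<pi> - {T} \<in> {\<sigma>. partition_on (N - T) \<sigma>}" using L1[OF a] by simp
  show "p N (insert T (\<pi> - {T})) * G T (\<pi> - {T}) = p N \<pi> * G T (\<pi> - {T})"
    using a by (simp add: insert_absorb)
next
  assume T: "T \<noteq> {}" "T \<subseteq> N"
  fix \<sigma> assume "\<sigma> \<in> {\<sigma>. partition_on (N - T) \<sigma>}"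
  then have a: "partition_on (N - T) \<sigma>" by auto
  have "T \<notin> \<sigma>" using partition_onD1[OF a] T by blast
  then show "insert T \<sigma> - {T} = \<sigma>" by simp
  show "insert T \<sigma> \<in> {\<pi>. partition_on N \<pi> \<and> T \<in> \<pi>}" using L2[OF T a] by simp
qed

lemma L6:
  assumes "finite M" "i \<notin> M"
  shows "(\<Sum>\<sigma>\<in>{\<sigma>. partition_on M \<sigma>}. \<Sum>B\<in>insert {} \<sigma>. f (add_to i B \<sigma>))
       = (\<Sum>\<rho>\<in>{\<rho>. partition_on (insert i M) \<rho>}. f \<rho>)"
proof -
  let ?A = "Sigma {\<sigma>. partition_on M \<sigma>} (\<lambda>\<sigma>. insert {} \<sigma>)"
  let ?\<phi> = "\<lambda>(\<sigma>, B). add_to i B \<sigma>"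
  have fin: "finite {\<sigma>. partition_on M \<sigma>}" using finitely_many_partition_on[OF assms(1)] .
  have fin2: "\<And>\<sigma>. \<sigma> \<in> {\<sigma>. partition_on M \<sigma>} \<Longrightarrow> finite (insert {} \<sigma>)"
    using finite_elements[OF assms(1)] by auto
  have "(\<Sum>\<sigma>\<in>{\<sigma>. partition_on M \<sigma>}. \<Sum>B\<in>insert {} \<sigma>. f (add_to i B \<sigma>)) = (\<Sum>x\<in>?A. f (?\<phi> x))"
    using sum.Sigma[OF fin, of "\<lambda>\<sigma>. insert {} \<sigma>" "\<lambda>\<sigma> B. f (add_to i B \<sigma>)"] fin2
    by (simp add: split_def)
  also have "\<dots> = (\<Sum>\<rho>\<in>?\<phi> ` ?A. f \<rho>)"
  proof (rule sum.reindex[symmetric, unfolded comp_def])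
    show "inj_on ?\<phi> ?A"
    proof (rule inj_onI)
      fix x y assume "x \<in> ?A" "y \<in> ?A" "?\<phi> x = ?\<phi> y"
      then obtain s1 b1 s2 b2 where xy: "x = (s1, b1)" "y = (s2, b2)" "partition_on M s1" "partition_on M s2"
        "b1 \<in> insert {} s1" "b2 \<in> insert {} s2" "add_to i b1 s1 = add_to i b2 s2" by auto
      show "x = y" using L5[OF xy(3,4) assms(2) xy(5,6,7)] xy(1,2) by simp
    qed
  qed
  also have "?\<phi> ` ?A = {\<rho>. partition_on (insert i M) \<rho>}"
  proof (rule set_eqI, rule iffI)
    fix \<rho> assume "\<rho> \<in> ?\<phi> ` ?A"
    then obtain x where x: "x \<in> ?A" "\<rho> = ?\<phi> x" by (rule imageE)
    obtain s1 b1 where sb: "x = (s1, b1)" by (cases x)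
    have "partition_on M s1" "b1 \<in> insert {} s1" using x(1) sb by auto
    moreover have "\<rho> = add_to i b1 s1" using x(2) sb by simp
    ultimately show "\<rho> \<in> {\<rho>. partition_on (insert i M) \<rho>}" using L3[of M s1 i b1] assms(2) by simp
  next
    fix \<rho> assume "\<rho> \<in> {\<rho>. partition_on (insert i M) \<rho>}"
    then have "partition_on (insert i M) \<rho>" by simp
    from L4[OF this assms(2)] obtain B where B: "partition_on M (rem i \<rho>)"
       "B \<in> insert {} (rem i \<rho>)" "\<rho> = add_to i B (rem i \<rho>)" by blast
    have "(rem i \<rho>, B) \<in> ?A" using B(1,2) by simp
    moreover have "?\<phi> (rem i \<rho>, B) = \<rho>" using B(3)[symmetric] by simp
    ultimately show "\<rho> \<in> ?\<phi> ` ?A" by (metis image_eqI)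
  qed
  finally show ?thesis .
qed

lemma Ep_decomp:
  assumes "finite N"
  shows "Ep p N G = (\<Sum>T\<in>Pow N - {{}}. Y p T N G)"
proof -
  have finP: "finite {\<pi>. partition_on N \<pi>}" using finitely_many_partition_on[OF assms] .
  have finT: "finite (Pow N - {{}})" using assms by simp
  have "Ep p N G = (\<Sum>\<pi>\<in>{\<pi>. partition_on N \<pi>}. \<Sum>T\<in>Pow N - {{}}. if T \<in> \<pi> then p N \<pi> * G T (\<pi> - {T}) else 0)"
    unfolding Ep_def
  proof (rule sum.cong[OF refl])
    fix \<pi> assume "\<pi> \<in> {\<pi>. partition_on N \<pi>}"
    then have P: "partition_on N \<pi>" by simp
    have sub: "\<pi> \<subseteq> Pow N - {{}}" using P by (auto simp: partition_on_def)
    have "(\<Sum>T\<in>Pow N - {{}}. if T \<in> \<pi> then p N \<pi> * G T (\<pi> - {T}) else 0)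
        = (\<Sum>T\<in>(Pow N - {{}}) \<inter> {T. T \<in> \<pi>}. p N \<pi> * G T (\<pi> - {T}))"
      by (simp only: sum.inter_restrict[OF finT] mem_Collect_eq)
    also have "(Pow N - {{}}) \<inter> {T. T \<in> \<pi>} = \<pi>" using sub by auto
    finally show "p N \<pi> * (\<Sum>S\<in>\<pi>. G S (\<pi> - {S})) = (\<Sum>T\<in>Pow N - {{}}. if T \<in> \<pi> then p N \<pi> * G T (\<pi> - {T}) else 0)"
      by (simp add: sum_distrib_left)
  qed
  also have "\<dots> = (\<Sum>T\<in>Pow N - {{}}. \<Sum>\<pi>\<in>{\<pi>. partition_on N \<pi>}. if T \<in> \<pi> then p N \<pi> * G T (\<pi> - {T}) else 0)"
    by (rule sum.swap)
  also have "\<dots> = (\<Sum>T\<in>Pow N - {{}}. Y p T N G)"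
    unfolding Y_def
  proof (rule sum.cong[OF refl])
    fix T
    have e: "{\<pi>. partition_on N \<pi> \<and> T \<in> \<pi>} = {\<pi> \<in> {\<pi>. partition_on N \<pi>}. T \<in> \<pi>}" by simp
    show "(\<Sum>\<pi>\<in>{\<pi>. partition_on N \<pi>}. if T \<in> \<pi> then p N \<pi> * G T (\<pi> - {T}) else 0) =
      (\<Sum>\<pi>\<in>{\<pi>. partition_on N \<pi> \<and> T \<in> \<pi>}. p N \<pi> * G T (\<pi> - {T}))"
      unfolding e by (rule sum.inter_filter[OF finP, symmetric])
  qed
  finally show ?thesis .
qed

lemma Y_zero: "(\<And>\<rho>. emb N T \<rho> \<Longrightarrow> G T \<rho> = 0) \<Longrightarrow> Y p T N G = 0"
  unfolding Y_def
proof (rule sum.neutral, rule ballI)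
  assume G: "\<And>\<rho>. emb N T \<rho> \<Longrightarrow> G T \<rho> = 0"
  fix \<pi> assume "\<pi> \<in> {\<pi>. partition_on N \<pi> \<and> T \<in> \<pi>}"
  then have a: "partition_on N \<pi>" "T \<in> \<pi>" by auto
  have "emb N T (\<pi> - {T})" unfolding emb_def using L1[OF a] a partition_onD1[OF a(1)] by blast
  then show "p N \<pi> * G T (\<pi> - {T}) = 0" using G by simp
qed

lemma Ep_single:
  assumes "finite N" "S \<noteq> {}" "\<And>T \<rho>. emb N T \<rho> \<Longrightarrow> T \<noteq> S \<Longrightarrow> G T \<rho> = 0"
  shows "Ep p N G = (if S \<subseteq> N then X p S N G else 0)"
proof -
  have "Ep p N G = (\<Sum>T\<in>Pow N - {{}}. if T = S then Y p T N G else 0)"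
    unfolding Ep_decomp[OF assms(1)]
  proof (rule sum.cong[OF refl])
    fix T assume "T \<in> Pow N - {{}}"
    show "Y p T N G = (if T = S then Y p T N G else 0)"
    proof (cases "T = S")
      case False
      then have "Y p T N G = 0" by (intro Y_zero) (rule assms(3))
      then show ?thesis using False by simp
    qed simp
  qed
  also have "\<dots> = (if S \<subseteq> N then Y p S N G else 0)"
    using assms(2) by (simp add: sum.delta' assms(1))
  finally show ?thesis using YX[OF assms(2)] by simp
qed


lemma RPX:
  assumes fin: "finite N" and NU: "N \<subseteq> U" and pos: "positive_rp U p"
    and S: "S \<noteq> {}" "S \<subseteq> N" and i: "i \<in> N" "i \<notin> S"
  shows "X p S (N - {i}) (rp p N W i) = real (card N) / (real (card N) - real (card S)) * X p S N W"
proof -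
  let ?c = "real (card N) / (real (card N) - real (card S))"
  let ?g = "\<lambda>\<rho>. p N (insert S \<rho>) * W S \<rho>"
  let ?M = "N - {i} - S"
  have "X p S (N - {i}) (rp p N W i) = (\<Sum>\<sigma>\<in>{\<sigma>. partition_on ?M \<sigma>}. ?c * (\<Sum>B\<in>insert {} \<sigma>. ?g (add_to i B \<sigma>)))"
    unfolding X_def
  proof (rule sum.cong[OF refl])
    fix \<sigma> assume "\<sigma> \<in> {\<sigma>. partition_on ?M \<sigma>}"
    then have P: "partition_on (N - {i} - S) \<sigma>" by simp
    have "partition_on (N - {i}) (insert S \<sigma>)" using L2[OF S(1) _ P] S(2) i(2) by blast
    then have q: "p (N - {i}) (insert S \<sigma>) > 0" using pos NU unfolding positive_rp_def by blast
    show "p (N - {i}) (insert S \<sigma>) * rp p N W i S \<sigma> = ?c * (\<Sum>B\<in>insert {} \<sigma>. ?g (add_to i B \<sigma>))"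
    proof -
      let ?q = "p (N - {i}) (insert S \<sigma>)"
      have "(\<Sum>B\<in>insert {} \<sigma>. p N (insert S (add_to i B \<sigma>)) / ?q * W S (add_to i B \<sigma>))
          = (\<Sum>B\<in>insert {} \<sigma>. ?g (add_to i B \<sigma>) / ?q)" by (simp add: field_simps)
      also have "\<dots> = (\<Sum>B\<in>insert {} \<sigma>. ?g (add_to i B \<sigma>)) / ?q" by (rule sum_divide_distrib[symmetric])
      finally show ?thesis unfolding rp_def using q by simp
    qed
  qed
  also have "\<dots> = ?c * (\<Sum>\<sigma>\<in>{\<sigma>. partition_on ?M \<sigma>}. \<Sum>B\<in>insert {} \<sigma>. ?g (add_to i B \<sigma>))"
    by (simp add: sum_distrib_left)
  also have "\<dots> = ?c * (\<Sum>\<rho>\<in>{\<rho>. partition_on (insert i ?M) \<rho>}. ?g \<rho>)"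
    using L6[of ?M i ?g] fin by simp
  also have "insert i ?M = N - S" using i by blast
  finally show ?thesis unfolding X_def by simp
qed

lemma PP_empty: "{\<sigma>. partition_on {} \<sigma>} = {{}}"
  by (auto simp: partition_on_empty)

lemma PN:
  assumes "N \<subseteq> U" "finite N" "N \<noteq> {}"
    and H: "\<forall>N v. N \<subseteq> U \<longrightarrow> tu_game N v \<longrightarrow> Ep p N (\<lambda>S \<pi>. v S) = Pot N v"
  shows "p N {N} = 1 / real (card N)"
proof -
  let ?v = "\<lambda>T. if T = N then (1::real) else 0"
  have tu: "tu_game N ?v" using assms(3) by (simp add: tu_game_def)
  have "Ep p N (\<lambda>S \<pi>. ?v S) = (if N \<subseteq> N then X p N N (\<lambda>S \<pi>. ?v S) else 0)"
    by (rule Ep_single[OF assms(2,3)]) simp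
  also have "\<dots> = p N {N}" unfolding X_def by (simp add: PP_empty)
  finally have 1: "Ep p N (\<lambda>S \<pi>. ?v S) = p N {N}" .
  have "Pot N ?v = (\<Sum>S\<in>{S. S \<subseteq> N \<and> S \<noteq> {}}. if S = N then fact (card N - 1) * fact (card N - card S) / fact (card N) else 0)"
    unfolding Pot_def by (rule sum.cong) auto
  also have "\<dots> = fact (card N - 1) / fact (card N)"
    using assms(2,3) by (simp add: sum.delta)
  also have "\<dots> = 1 / real (card N)"
  proof -
    have "card N > 0" using assms(2,3) by (simp add: card_gt_0_iff)
    then obtain m where m: "card N = Suc m" using gr0_implies_Suc by blast
    have "(fact m::real) > 0" by simp
    moreover have "(fact m::real) + fact m * real m > 0"
      using \<open>(fact m::real) > 0\<close> by (simp add: add_pos_nonneg)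
    ultimately show ?thesis unfolding m by (simp add: field_simps)
  qed
  finally show ?thesis using 1 H assms(1) tu by simp
qed

lemma rem_comm: "rem i (rem j \<rho>) = rem j (rem i \<rho>)"
  unfolding rem_def by (auto simp: image_iff)

lemma L7:
  assumes fin: "finite M" and ij: "i \<noteq> j" "i \<notin> M" "j \<notin> M" and P: "partition_on M \<pi>"
  shows "(\<Sum>B'\<in>insert {} \<pi>. \<Sum>B\<in>insert {} (add_to j B' \<pi>). g (add_to i B (add_to j B' \<pi>)))
       = (\<Sum>\<rho>\<in>{\<rho>. partition_on (insert i (insert j M)) \<rho> \<and> rem j (rem i \<rho>) = \<pi>}. g \<rho>)"
proof -
  let ?A = "Sigma (insert {} \<pi>) (\<lambda>B'. insert {} (add_to j B' \<pi>))"
  let ?\<phi> = "\<lambda>(B', B). add_to i B (add_to j B' \<pi>)"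
  have finpi: "finite (insert {} \<pi>)" using finite_elements[OF fin P] by simp
  have Pj: "\<And>B'. B' \<in> insert {} \<pi> \<Longrightarrow> partition_on (insert j M) (add_to j B' \<pi>)"
    using L3[OF P ij(3)] by blast
  have fin2: "\<forall>B'\<in>insert {} \<pi>. finite (insert {} (add_to j B' \<pi>))"
    using finite_elements[OF _ Pj] fin by blast
  have ijM: "i \<notin> insert j M" using ij by simp
  have "(\<Sum>B'\<in>insert {} \<pi>. \<Sum>B\<in>insert {} (add_to j B' \<pi>). g (add_to i B (add_to j B' \<pi>))) = (\<Sum>x\<in>?A. g (?\<phi> x))"
    using sum.Sigma[OF finpi fin2, of "\<lambda>B' B. g (add_to i B (add_to j B' \<pi>))"]
    by (simp add: split_def)
  also have "\<dots> = (\<Sum>\<rho>\<in>?\<phi> ` ?A. g \<rho>)"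
  proof (rule sum.reindex[symmetric, unfolded comp_def])
    show "inj_on ?\<phi> ?A"
    proof (rule inj_onI)
      fix x y assume xy0: "x \<in> ?A" "y \<in> ?A" "?\<phi> x = ?\<phi> y"
      obtain a1 b1 where x: "x = (a1, b1)" by (cases x)
      obtain a2 b2 where y: "y = (a2, b2)" by (cases y)
      have m: "a1 \<in> insert {} \<pi>" "b1 \<in> insert {} (add_to j a1 \<pi>)"
              "a2 \<in> insert {} \<pi>" "b2 \<in> insert {} (add_to j a2 \<pi>)"
        using xy0(1,2) x y by auto
      have e: "add_to i b1 (add_to j a1 \<pi>) = add_to i b2 (add_to j a2 \<pi>)" using xy0(3) x y by simp
      from L5[OF Pj[OF m(1)] Pj[OF m(3)] ijM m(2) m(4) e]
      have e2: "add_to j a1 \<pi> = add_to j a2 \<pi>" "b1 = b2" by auto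
      from L5[OF P P ij(3) m(1) m(3) e2(1)] have "a1 = a2" by simp
      then show "x = y" using x y e2(2) by simp
    qed
  qed
  also have "?\<phi> ` ?A = {\<rho>. partition_on (insert i (insert j M)) \<rho> \<and> rem j (rem i \<rho>) = \<pi>}"
  proof (rule set_eqI, rule iffI)
    fix \<rho> assume "\<rho> \<in> ?\<phi> ` ?A"
    then obtain x where x: "x \<in> ?A" "\<rho> = ?\<phi> x" by (rule imageE)
    obtain a b where ab: "x = (a, b)" by (cases x)
    have m: "a \<in> insert {} \<pi>" "b \<in> insert {} (add_to j a \<pi>)" using x(1) ab by auto
    have r: "\<rho> = add_to i b (add_to j a \<pi>)" using x(2) ab by simp
    have Pt: "partition_on (insert j M) (add_to j a \<pi>)" using Pj[OF m(1)] .
    have 1: "partition_on (insert i (insert j M)) \<rho>" unfolding r using L3[OF Pt ijM m(2)] .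
    have e1: "{} \<notin> add_to j a \<pi>" "i \<notin> \<Union>(add_to j a \<pi>)" using Pt ijM by (auto simp: partition_on_def)
    have e2: "{} \<notin> \<pi>" "j \<notin> \<Union>\<pi>" using P ij by (auto simp: partition_on_def)
    have "rem j (rem i \<rho>) = \<pi>" unfolding r rem_add[OF e1 m(2)] rem_add[OF e2 m(1)] ..
    then show "\<rho> \<in> {\<rho>. partition_on (insert i (insert j M)) \<rho> \<and> rem j (rem i \<rho>) = \<pi>}" using 1 by simp
  next
    fix \<rho> assume "\<rho> \<in> {\<rho>. partition_on (insert i (insert j M)) \<rho> \<and> rem j (rem i \<rho>) = \<pi>}"
    then have a: "partition_on (insert i (insert j M)) \<rho>" "rem j (rem i \<rho>) = \<pi>" by auto
    from L4[OF a(1) ijM] obtain B where B: "partition_on (insert j M) (rem i \<rho>)"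
       "B \<in> insert {} (rem i \<rho>)" "\<rho> = add_to i B (rem i \<rho>)" by blast
    from L4[OF B(1) ij(3)] obtain B' where B': "partition_on M (rem j (rem i \<rho>))"
       "B' \<in> insert {} (rem j (rem i \<rho>))" "rem i \<rho> = add_to j B' (rem j (rem i \<rho>))" by blast
    have t: "rem i \<rho> = add_to j B' \<pi>" using B'(3) a(2) by simp
    have "(B', B) \<in> ?A" using B'(2) B(2) a(2) t by simp
    moreover have "?\<phi> (B', B) = \<rho>" using B(3)[symmetric] t by simp
    ultimately show "\<rho> \<in> ?\<phi> ` ?A" by (metis image_eqI)
  qed
  finally show ?thesis .
qed


lemma X_cong: "(\<And>\<sigma>. partition_on (N - S) \<sigma> \<Longrightarrow> G S \<sigma> = G' S \<sigma>) \<Longrightarrow> X p S N G = X p S N G'"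
  unfolding X_def by (rule sum.cong) auto

lemma sum_minus_one:
  assumes "finite A" "a \<in> A"
  shows "(\<Sum>T\<in>A. if T = a then 0 else f T) = (\<Sum>T\<in>A. f T) - (f a :: real)"
proof -
  have "(\<Sum>T\<in>A. f T) = (\<Sum>T\<in>A. (if T = a then 0 else f T) + (if T = a then f T else 0))"
    by (rule sum.cong) auto
  also have "\<dots> = (\<Sum>T\<in>A. if T = a then 0 else f T) + f a"
    using assms by (simp add: sum.distrib)
  finally show ?thesis by simp
qed

lemma back_potr:
  assumes U: "finite U" and pos: "positive_rp U p"
    and H: "\<forall>N v. N \<subseteq> U \<longrightarrow> tu_game N v \<longrightarrow> Ep p N (\<lambda>S \<pi>. v S) = Pot N v"
    and R: "restriction_operator U r"
    and EQ: "\<forall>N w i S \<pi>. N \<subseteq> U \<longrightarrow> tux_game N w \<longrightarrow> i \<in> N \<longrightarrow> emb (N - {i}) S \<pi> \<longrightarrow>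
            r N w i S \<pi> = rp p N w i S \<pi>"
  shows "N \<subseteq> U \<Longrightarrow> tux_game N w \<Longrightarrow> potr r N w = Ep p N w"
proof -
  assume NU: "N \<subseteq> U"
  have "finite N" using U NU finite_subset by blast
  then show "tux_game N w \<Longrightarrow> potr r N w = Ep p N w" using NU
  proof (induction N arbitrary: w rule: finite_psubset_induct)
    case (psubset N)
    show ?case
    proof (cases "N = {}")
      case True
      show ?thesis unfolding True Ep_def by (simp add: potr.simps[of r "{}" w] PP_empty)
    next
      case False
      let ?n = "real (card N)"
      have npos: "card N > 0" using False psubset.hyps by (simp add: card_gt_0_iff)
      have finP: "finite (Pow N - {{}})" using psubset.hyps by simp
      have Ek: "Ep p (N - {k}) (r N w k) = (\<Sum>T\<in>Pow N - {{}}. if k \<notin> T then ?n / (?n - real (card T)) * X p T N w else 0)"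
        if k: "k \<in> N" for k
      proof -
        have fink: "finite (N - {k})" using psubset.hyps by simp
        have "Ep p (N - {k}) (r N w k) = (\<Sum>T\<in>Pow (N - {k}) - {{}}. ?n / (?n - real (card T)) * X p T N w)"
          unfolding Ep_decomp[OF fink]
        proof (rule sum.cong[OF refl])
          fix T assume T: "T \<in> Pow (N - {k}) - {{}}"
          have T1: "T \<noteq> {}" "T \<subseteq> N - {k}" using T by auto
          have "Y p T (N - {k}) (r N w k) = X p T (N - {k}) (r N w k)" by (rule YX[OF T1])
          also have "\<dots> = X p T (N - {k}) (rp p N w k)"
          proof (rule X_cong)
            fix \<sigma> assume "partition_on (N - {k} - T) \<sigma>"
            then have "emb (N - {k}) T \<sigma>" using T by (simp add: emb_def)
            then show "r N w k T \<sigma> = rp p N w k T \<sigma>" using EQ psubset.prems(1,2) k by simp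
          qed
          also have "\<dots> = ?n / (?n - real (card T)) * X p T N w"
            by (rule RPX[OF psubset.hyps(1) psubset.prems(2) pos]) (use T1 k in auto)
          finally show "Y p T (N - {k}) (r N w k) = ?n / (?n - real (card T)) * X p T N w" .
        qed
        also have "Pow (N - {k}) - {{}} = (Pow N - {{}}) \<inter> {T. k \<notin> T}" by auto
        also have "(\<Sum>T\<in>(Pow N - {{}}) \<inter> {T. k \<notin> T}. ?n / (?n - real (card T)) * X p T N w)
          = (\<Sum>T\<in>Pow N - {{}}. if k \<notin> T then ?n / (?n - real (card T)) * X p T N w else 0)"
          by (simp only: sum.inter_restrict[OF finP] mem_Collect_eq)
        finally show ?thesis .
      qed
      have IH: "potr r (N - {k}) (r N w k) = Ep p (N - {k}) (r N w k)" if k: "k \<in> N" for k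
      proof -
        have "tux_game (N - {k}) (r N w k)" using R psubset.prems k unfolding restriction_operator_def by blast
        then show ?thesis using psubset.IH[of "N - {k}"] k psubset.prems(2) by blast
      qed
      have "(\<Sum>k\<in>N. potr r (N - {k}) (r N w k))
          = (\<Sum>k\<in>N. \<Sum>T\<in>Pow N - {{}}. if k \<notin> T then ?n / (?n - real (card T)) * X p T N w else 0)"
        using IH Ek by simp
      also have "\<dots> = (\<Sum>T\<in>Pow N - {{}}. \<Sum>k\<in>N. if k \<notin> T then ?n / (?n - real (card T)) * X p T N w else 0)"
        by (rule sum.swap)
      also have "\<dots> = (\<Sum>T\<in>Pow N - {{}}. if T = N then 0 else ?n * X p T N w)"
      proof (rule sum.cong[OF refl])
        fix T assume T: "T \<in> Pow N - {{}}"
        have "(\<Sum>k\<in>N. if k \<notin> T then ?n / (?n - real (card T)) * X p T N w else 0)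
            = (\<Sum>k\<in>{k\<in>N. k \<notin> T}. ?n / (?n - real (card T)) * X p T N w)"
          by (rule sum.inter_filter[OF psubset.hyps(1), symmetric])
        also have "{k\<in>N. k \<notin> T} = N - T" by auto
        also have "(\<Sum>k\<in>N - T. ?n / (?n - real (card T)) * X p T N w) = real (card (N - T)) * (?n / (?n - real (card T)) * X p T N w)"
          by simp
        also have "real (card (N - T)) = ?n - real (card T)"
        proof -
          have TN: "T \<subseteq> N" using T by blast
          have fT: "finite T" using TN psubset.hyps(1) by (rule finite_subset)
          have "card (N - T) = card N - card T" using fT TN by (rule card_Diff_subset)
          moreover have "card T \<le> card N" using TN psubset.hyps(1) by (rule card_mono[rotated])
          ultimately show ?thesis by (simp add: of_nat_diff)
        qed
        finally have e: "(\<Sum>k\<in>N. if k \<notin> T then ?n / (?n - real (card T)) * X p T N w else 0) = (?n - real (card T)) * (?n / (?n - real (card T)) * X p T N w)" .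
        show "(\<Sum>k\<in>N. if k \<notin> T then ?n / (?n - real (card T)) * X p T N w else 0) = (if T = N then 0 else ?n * X p T N w)"
        proof (cases "T = N")
          case True then show ?thesis using e by simp
        next
          case False
          then have "T \<subset> N" using T by auto
          then have "card T < card N" using psubset.hyps(1) by (simp add: psubset_card_mono)
          then have "?n - real (card T) \<noteq> 0" by simp
          then show ?thesis using e False by simp
        qed
      qed
      also have "\<dots> = (\<Sum>T\<in>Pow N - {{}}. ?n * X p T N w) - ?n * X p N N w"
        by (rule sum_minus_one[OF finP]) (use False in auto)
      also have "(\<Sum>T\<in>Pow N - {{}}. ?n * X p T N w) = ?n * Ep p N w"
        unfolding Ep_decomp[OF psubset.hyps(1)] sum_distrib_left
        by (rule sum.cong[OF refl]) (simp add: YX)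
      also have "X p N N w = p N {N} * w N {}" unfolding X_def by (simp add: PP_empty)
      also have "p N {N} = 1 / ?n" using PN[OF psubset.prems(2) psubset.hyps(1) False H] .
      finally have sumeq: "(\<Sum>k\<in>N. potr r (N - {k}) (r N w k)) = ?n * Ep p N w - w N {}"
        using npos by simp
      show ?thesis
        using False psubset.hyps(1) npos by (simp add: potr.simps[of r N w] sumeq)
    qed
  qed
qed


lemma aux_cancel: "q \<noteq> (0::real) \<Longrightarrow> q / a * (c * (t / q)) = c / a * t"
  by (cases "a = 0") (simp_all add: field_simps)

lemma twostep:
  assumes U: "finite U" and pos: "positive_rp U p" and R: "restriction_operator U r"
    and EQ: "\<forall>N w i S \<pi>. N \<subseteq> U \<longrightarrow> tux_game N w \<longrightarrow> i \<in> N \<longrightarrow> emb (N - {i}) S \<pi> \<longrightarrow>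
            r N w i S \<pi> = rp p N w i S \<pi>"
    and NU: "N \<subseteq> U" and w: "tux_game N w" and ij: "i \<in> N" "j \<in> N" "i \<noteq> j"
    and e: "emb (N - {i} - {j}) S \<pi>"
  shows "r (N - {i}) (r N w i) j S \<pi> = (if S = {} then 0 else
      real (card N) / (real (card N) - real (card S)) *
      (real (card N - 1) / (real (card N - 1) - real (card S))) / p (N - {i} - {j}) (insert S \<pi>) *
      (\<Sum>\<rho>\<in>{\<rho>. partition_on (N - S) \<rho> \<and> rem j (rem i \<rho>) = \<pi>}. p N (insert S \<rho>) * w S \<rho>))"
proof -
  have finN: "finite N" using U NU finite_subset by blast
  have W: "tux_game (N - {i}) (r N w i)" using R NU w ij(1) unfolding restriction_operator_def by blast
  have NiU: "N - {i} \<subseteq> U" using NU by blast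
  have jNi: "j \<in> N - {i}" using ij by simp
  have cNi: "card (N - {i}) = card N - 1" using ij(1) finN by simp
  show ?thesis
  proof (cases "S = {}")
    case True
    have "tux_game (N - {i} - {j}) (r (N - {i}) (r N w i) j)"
      using R NiU W jNi unfolding restriction_operator_def by blast
    then show ?thesis using e True unfolding tux_game_def emb_def by simp
  next
    case False
    let ?c1 = "real (card N - 1) / (real (card N - 1) - real (card S))"
    let ?c2 = "real (card N) / (real (card N) - real (card S))"
    let ?q0 = "p (N - {i} - {j}) (insert S \<pi>)"
    let ?g = "\<lambda>\<rho>. p N (insert S \<rho>) * w S \<rho>"
    let ?M = "N - {i} - {j} - S"
    have SN: "S \<subseteq> N - {i} - {j}" and P: "partition_on ?M \<pi>" using e unfolding emb_def by auto
    have finM: "finite ?M" using finN by simp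
    have per: "p (N - {i}) (insert S (add_to j B' \<pi>)) / ?q0 * r N w i S (add_to j B' \<pi>) = ?c2 / ?q0 * (\<Sum>B\<in>insert {} (add_to j B' \<pi>). ?g (add_to i B (add_to j B' \<pi>)))"
      if B': "B' \<in> insert {} \<pi>" for B'
    proof -
      let ?\<tau> = "add_to j B' \<pi>"
      have eqM: "insert j ?M = N - {i} - S" using ij SN by blast
      have Pt: "partition_on (N - {i} - S) ?\<tau>" using L3[OF P _ B', of j] eqM by auto
      have emt: "emb (N - {i}) S ?\<tau>" unfolding emb_def using Pt SN by blast
      have "r N w i S ?\<tau> = rp p N w i S ?\<tau>" using EQ NU w ij(1) emt by blast
      have "partition_on (N - {i}) (insert S ?\<tau>)" using L2[OF False _ Pt] SN by blast
      then have q: "p (N - {i}) (insert S ?\<tau>) > 0" using pos NiU unfolding positive_rp_def by blast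
      let ?q = "p (N - {i}) (insert S ?\<tau>)"
      have "r N w i S ?\<tau> = ?c2 * (\<Sum>B\<in>insert {} ?\<tau>. p N (insert S (add_to i B ?\<tau>)) / ?q * w S (add_to i B ?\<tau>))"
        using \<open>r N w i S ?\<tau> = rp p N w i S ?\<tau>\<close> unfolding rp_def .
      also have "(\<Sum>B\<in>insert {} ?\<tau>. p N (insert S (add_to i B ?\<tau>)) / ?q * w S (add_to i B ?\<tau>))
          = (\<Sum>B\<in>insert {} ?\<tau>. ?g (add_to i B ?\<tau>) / ?q)" by (simp add: field_simps)
      also have "\<dots> = (\<Sum>B\<in>insert {} ?\<tau>. ?g (add_to i B ?\<tau>)) / ?q" by (rule sum_divide_distrib[symmetric])
      finally have rr: "r N w i S ?\<tau> = ?c2 * ((\<Sum>B\<in>insert {} ?\<tau>. ?g (add_to i B ?\<tau>)) / ?q)" .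
      show ?thesis
        unfolding rr using q by (intro aux_cancel) simp
    qed
    have "r (N - {i}) (r N w i) j S \<pi> = rp p (N - {i}) (r N w i) j S \<pi>"
      using EQ NiU W jNi e by blast
    also have "\<dots> = ?c1 * (\<Sum>B'\<in>insert {} \<pi>. ?c2 / ?q0 * (\<Sum>B\<in>insert {} (add_to j B' \<pi>). ?g (add_to i B (add_to j B' \<pi>))))"
      unfolding rp_def cNi by (rule arg_cong[where f = "\<lambda>x. ?c1 * x"], rule sum.cong[OF refl], rule per)
    also have "\<dots> = ?c1 * (?c2 / ?q0) * (\<Sum>B'\<in>insert {} \<pi>. \<Sum>B\<in>insert {} (add_to j B' \<pi>). ?g (add_to i B (add_to j B' \<pi>)))"
      by (simp add: sum_distrib_left mult.assoc)
    also have "(\<Sum>B'\<in>insert {} \<pi>. \<Sum>B\<in>insert {} (add_to j B' \<pi>). ?g (add_to i B (add_to j B' \<pi>)))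
       = (\<Sum>\<rho>\<in>{\<rho>. partition_on (insert i (insert j ?M)) \<rho> \<and> rem j (rem i \<rho>) = \<pi>}. ?g \<rho>)"
      by (rule L7[OF finM ij(3) _ _ P]) auto
    also have "insert i (insert j ?M) = N - S" using ij SN by blast
    finally show ?thesis using False by (simp add: field_simps)
  qed
qed

lemma back_PI:
  assumes U: "finite U" and pos: "positive_rp U p" and R: "restriction_operator U r"
    and EQ: "\<forall>N w i S \<pi>. N \<subseteq> U \<longrightarrow> tux_game N w \<longrightarrow> i \<in> N \<longrightarrow> emb (N - {i}) S \<pi> \<longrightarrow>
            r N w i S \<pi> = rp p N w i S \<pi>"
  shows "path_independent U r"
  unfolding path_independent_def
proof (intro allI impI)
  fix N w i j S \<pi>
  assume a: "N \<subseteq> U" "tux_game N w" "i \<in> N" "j \<in> N" "i \<noteq> j" "emb (N - {i} - {j}) S \<pi>"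
  have e2: "emb (N - {j} - {i}) S \<pi>" using a(6) by (simp add: insert_commute Diff_insert[symmetric])
  have s: "N - {j} - {i} = N - {i} - {j}" by blast
  have "{\<rho>. partition_on (N - S) \<rho> \<and> rem i (rem j \<rho>) = \<pi>} = {\<rho>. partition_on (N - S) \<rho> \<and> rem j (rem i \<rho>) = \<pi>}"
    by (simp add: rem_comm)
  then show "r (N - {i}) (r N w i) j S \<pi> = r (N - {j}) (r N w j) i S \<pi>"
    unfolding twostep[OF U pos R EQ a(1,2,3,4,5,6)] twostep[OF U pos R EQ a(1,2,4,3) a(5)[symmetric] e2] s
    by simp
qed

lemma back_null:
  assumes EQ: "\<forall>N w i S \<pi>. N \<subseteq> U \<longrightarrow> tux_game N w \<longrightarrow> i \<in> N \<longrightarrow> emb (N - {i}) S \<pi> \<longrightarrow>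
            r N w i S \<pi> = rp p N w i S \<pi>"
  shows "preserves_null U r"
  unfolding preserves_null_def
proof (intro allI impI)
  fix N i S \<pi> assume a: "N \<subseteq> U" "i \<in> N" "emb (N - {i}) S \<pi>"
  have "tux_game N (\<lambda>_ _. 0)" by (simp add: tux_game_def)
  then have "r N (\<lambda>_ _. 0) i S \<pi> = rp p N (\<lambda>_ _. 0) i S \<pi>" using EQ a by blast
  then show "r N (\<lambda>_ _. 0) i S \<pi> = 0" by (simp add: rp_def)
qed


lemma R_tux: "restriction_operator U r \<Longrightarrow> N \<subseteq> U \<Longrightarrow> tux_game N w \<Longrightarrow> i \<in> N \<Longrightarrow> tux_game (N - {i}) (r N w i)"
  unfolding restriction_operator_def by blast

lemma R_loc: "restriction_operator U r \<Longrightarrow> N \<subseteq> U \<Longrightarrow> tux_game N w \<Longrightarrow> tux_game N w' \<Longrightarrow> i \<in> N \<Longrightarrow>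
  emb (N - {i}) S \<pi> \<Longrightarrow> (\<And>B. B \<in> insert {} \<pi> \<Longrightarrow> w S (add_to i B \<pi>) = w' S (add_to i B \<pi>)) \<Longrightarrow>
  r N w i S \<pi> = r N w' i S \<pi>"
  unfolding restriction_operator_def by blast

lemma R_zero:
  assumes "restriction_operator U r" "preserves_null U r" "N \<subseteq> U" "tux_game N w" "i \<in> N"
    "emb (N - {i}) S \<pi>" "\<And>B. B \<in> insert {} \<pi> \<Longrightarrow> w S (add_to i B \<pi>) = 0"
  shows "r N w i S \<pi> = 0"
proof -
  have z: "tux_game N (\<lambda>_ _. 0)" by (simp add: tux_game_def)
  have "r N w i S \<pi> = r N (\<lambda>_ _. 0) i S \<pi>"
    by (rule R_loc[OF assms(1,3,4) z assms(5,6)]) (simp add: assms(7))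
  also have "\<dots> = 0" using assms(2,3,5,6) unfolding preserves_null_def by blast
  finally show ?thesis .
qed

lemma PI_use: "path_independent U r \<Longrightarrow> N \<subseteq> U \<Longrightarrow> tux_game N w \<Longrightarrow> i \<in> N \<Longrightarrow> j \<in> N \<Longrightarrow> i \<noteq> j \<Longrightarrow>
  emb (N - {i} - {j}) S \<pi> \<Longrightarrow> r (N - {i}) (r N w i) j S \<pi> = r (N - {j}) (r N w j) i S \<pi>"
  unfolding path_independent_def by blast


lemma forward:
  assumes U: "finite U" and pos: "positive_rp U p" and R: "restriction_operator U r"
    and PI: "path_independent U r" and NL: "preserves_null U r"
    and PH: "\<forall>N w. N \<subseteq> U \<longrightarrow> tux_game N w \<longrightarrow> potr r N w = Ep p N w"
  shows "N \<subseteq> U \<Longrightarrow> \<forall>w i S \<sigma>. tux_game N w \<longrightarrow> i \<in> N \<longrightarrow> emb (N - {i}) S \<sigma> \<longrightarrow> r N w i S \<sigma> = rp p N w i S \<sigma>"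
proof -
  assume NU: "N \<subseteq> U"
  have "finite N" using U NU finite_subset by blast
  then show ?thesis using NU
  proof (induction N rule: finite_psubset_induct)
    case (psubset N)
    note finN = psubset.hyps(1)
    note NU = psubset.prems
    show ?case
    proof (intro allI impI)
      fix w i S \<sigma>0
      assume w: "tux_game N w" and i: "i \<in> N" and e: "emb (N - {i}) S \<sigma>0"
      have SNi: "S \<subseteq> N - {i}" and P0: "partition_on (N - {i} - S) \<sigma>0" using e unfolding emb_def by auto
      have iM: "i \<notin> N - {i} - S" by simp
      show "r N w i S \<sigma>0 = rp p N w i S \<sigma>0"
      proof (cases "S = {}")
        case True
        have "tux_game (N - {i}) (r N w i)" by (rule R_tux[OF R NU w i])
        then have l: "r N w i S \<sigma>0 = 0" using P0 True unfolding tux_game_def by simp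
        have "\<And>B. B \<in> insert {} \<sigma>0 \<Longrightarrow> w {} (add_to i B \<sigma>0) = 0"
        proof -
          fix B assume B: "B \<in> insert {} \<sigma>0"
          have "partition_on (insert i (N - {i} - S)) (add_to i B \<sigma>0)" by (rule L3[OF P0 iM B])
          moreover have "insert i (N - {i} - S) = N" using i True by blast
          ultimately show "w {} (add_to i B \<sigma>0) = 0" using w unfolding tux_game_def by simp
        qed
        then have "rp p N w i S \<sigma>0 = 0" unfolding rp_def True by simp
        then show ?thesis using l by simp
      next
        case False
        let ?n = "real (card N)"
        let ?s = "real (card S)"
        have iS: "i \<notin> S" using SNi by blast
        have SN: "S \<subseteq> N" using SNi by blast
        have finS: "finite S" using finN SN finite_subset by blast
        have NS: "N \<noteq> S" using i iS by blast
        have Nne: "N \<noteq> {}" using i by blast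
        have cardNS: "real (card (N - S)) = ?n - ?s"
        proof -
          have "card (N - S) = card N - card S" using finS SN by (rule card_Diff_subset)
          moreover have "card S \<le> card N" using SN finN by (rule card_mono[rotated])
          ultimately show ?thesis by (simp add: of_nat_diff)
        qed
        have sn: "?s < ?n"
        proof -
          have "S \<subset> N" using SN NS by blast
          then show ?thesis using finN by (simp add: psubset_card_mono)
        qed
        have sumA: "(\<Sum>k\<in>N - S. X p S (N - {k}) (r N w' k)) = ?n * X p S N w'" if w': "tux_game N w'" for w'
        proof -
          define u where "u = (\<lambda>T \<rho>. if T = S then w' T \<rho> else 0)"
          have tu: "tux_game N u" using w' False unfolding u_def tux_game_def by simp
          have Ek: "potr r (N - {k}) (r N u k) = (if S \<subseteq> N - {k} then X p S (N - {k}) (r N w' k) else 0)"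
            if k: "k \<in> N" for k
          proof -
            have NkU: "N - {k} \<subseteq> U" using NU by blast
            have tk: "tux_game (N - {k}) (r N u k)" by (rule R_tux[OF R NU tu k])
            have "potr r (N - {k}) (r N u k) = Ep p (N - {k}) (r N u k)" using PH NkU tk by blast
            also have "\<dots> = (if S \<subseteq> N - {k} then X p S (N - {k}) (r N u k) else 0)"
            proof (rule Ep_single)
              show "finite (N - {k})" using finN by simp
              show "S \<noteq> {}" by (rule False)
              fix T \<rho> assume "emb (N - {k}) T \<rho>" "T \<noteq> S"
              then show "r N u k T \<rho> = 0"
                by (intro R_zero[OF R NL NU tu k]) (simp_all add: u_def)
            qed
            also have "X p S (N - {k}) (r N u k) = X p S (N - {k}) (r N w' k)" if "S \<subseteq> N - {k}"
            proof (rule X_cong)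
              fix \<sigma> assume "partition_on (N - {k} - S) \<sigma>"
              then have "emb (N - {k}) S \<sigma>" using that by (simp add: emb_def)
              then show "r N u k S \<sigma> = r N w' k S \<sigma>"
                by (rule R_loc[OF R NU tu w' k]) (simp add: u_def)
            qed
            ultimately show ?thesis by simp
          qed
          have "potr r N u = (u N {} + (\<Sum>k\<in>N. potr r (N - {k}) (r N u k))) / ?n"
            using Nne finN by (simp add: potr.simps[of r N u])
          also have "u N {} = 0" using NS by (simp add: u_def)
          also have "(\<Sum>k\<in>N. potr r (N - {k}) (r N u k)) = (\<Sum>k\<in>N. if S \<subseteq> N - {k} then X p S (N - {k}) (r N w' k) else 0)"
            using Ek by simp
          also have "\<dots> = (\<Sum>k\<in>{k\<in>N. S \<subseteq> N - {k}}. X p S (N - {k}) (r N w' k))"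
            by (rule sum.inter_filter[OF finN, symmetric])
          also have "{k\<in>N. S \<subseteq> N - {k}} = N - S" using SN by blast
          finally have 1: "potr r N u = (\<Sum>k\<in>N - S. X p S (N - {k}) (r N w' k)) / ?n" by simp
          have "potr r N u = Ep p N u" using PH NU tu by blast
          also have "\<dots> = X p S N u"
          proof -
            have "Ep p N u = (if S \<subseteq> N then X p S N u else 0)"
              by (rule Ep_single[OF finN False]) (simp add: u_def)
            then show ?thesis using SN by simp
          qed
          also have "\<dots> = X p S N w'" by (rule X_cong) (simp add: u_def)
          finally have 2: "potr r N u = X p S N w'" .
          have "?n > 0" using sn by linarith
          then show ?thesis using 1 2 by (simp add: field_simps)
        qed
        have stepB: "real (card N - 1) / (real (card N - 1) - ?s) * X p S (N - {k}) (r N w' k)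
             = X p S (N - {k} - {j}) (r (N - {k}) (r N w' k) j)"
          if w': "tux_game N w'" and k: "k \<in> N - S" and j: "j \<in> N - S" and jk: "j \<noteq> k" for w' k j
        proof -
          have kN: "k \<in> N" using k by simp
          have NkU: "N - {k} \<subseteq> U" using NU by blast
          have Wk: "tux_game (N - {k}) (r N w' k)" by (rule R_tux[OF R NU w' kN])
          have cNk: "card (N - {k}) = card N - 1" using kN finN by simp
          have "X p S (N - {k} - {j}) (rp p (N - {k}) (r N w' k) j)
              = real (card (N - {k})) / (real (card (N - {k})) - ?s) * X p S (N - {k}) (r N w' k)"
            by (rule RPX[OF _ NkU pos False]) (use finN k j jk SN in auto)
          moreover have "X p S (N - {k} - {j}) (rp p (N - {k}) (r N w' k) j) = X p S (N - {k} - {j}) (r (N - {k}) (r N w' k) j)"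
          proof (rule X_cong)
            fix \<sigma> assume "partition_on (N - {k} - {j} - S) \<sigma>"
            then have em: "emb (N - {k} - {j}) S \<sigma>" using SN j k by (auto simp: emb_def)
            have sub: "N - {k} \<subset> N" using kN by blast
            have jNk: "j \<in> N - {k}" using j jk by simp
            have "\<forall>w i S \<sigma>. tux_game (N - {k}) w \<longrightarrow> i \<in> N - {k} \<longrightarrow> emb (N - {k} - {i}) S \<sigma> \<longrightarrow>
                r (N - {k}) w i S \<sigma> = rp p (N - {k}) w i S \<sigma>"
              by (rule psubset.IH[OF sub NkU])
            then show "rp p (N - {k}) (r N w' k) j S \<sigma> = r (N - {k}) (r N w' k) j S \<sigma>"
              using Wk jNk em by simp
          qed
          ultimately show ?thesis unfolding cNk by simp
        qed
        have symB: "X p S (N - {k} - {j}) (r (N - {k}) (r N w' k) j) = X p S (N - {j} - {k}) (r (N - {j}) (r N w' j) k)"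
          if w': "tux_game N w'" and k: "k \<in> N - S" and j: "j \<in> N - S" and jk: "j \<noteq> k" for w' k j
        proof -
          have s: "N - {j} - {k} = N - {k} - {j}" by blast
          show ?thesis unfolding s
          proof (rule X_cong)
            fix \<sigma> assume "partition_on (N - {k} - {j} - S) \<sigma>"
            then have em: "emb (N - {k} - {j}) S \<sigma>" using SN j k by (auto simp: emb_def)
            show "r (N - {k}) (r N w' k) j S \<sigma> = r (N - {j}) (r N w' j) k S \<sigma>"
              by (rule PI_use[OF PI NU w']) (use k j jk em in auto)
          qed
        qed
        have cpos: "real (card N - 1) / (real (card N - 1) - ?s) \<noteq> 0" if j: "j \<in> N - S" and k: "k \<in> N - S" and jk: "j \<noteq> k" for j k
        proof -
          have "S \<subset> N - {k}" using SN j k jk by blast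
          then have "card S < card (N - {k})" using finN by (simp add: psubset_card_mono)
          also have "card (N - {k}) = card N - 1" using k finN by simp
          finally have "card S < card N - 1" .
          then have a: "real (card S) < real (card N - 1)" by (simp only: of_nat_less_iff)
          have h1: "real (card N - 1) \<noteq> 0" using a by linarith
          have h2: "real (card N - 1) - ?s \<noteq> 0" using a by linarith
          from h1 h2 show ?thesis by (simp only: divide_eq_0_iff de_Morgan_disj not_False_eq_True)
        qed
        have eqB: "X p S (N - {k}) (r N w' k) = X p S (N - {i}) (r N w' i)" if w': "tux_game N w'" and k: "k \<in> N - S" for w' k
        proof (cases "k = i")
          case False
          have iNS: "i \<in> N - S" using i iS by simp
          have "real (card N - 1) / (real (card N - 1) - ?s) * X p S (N - {k}) (r N w' k)
              = real (card N - 1) / (real (card N - 1) - ?s) * X p S (N - {i}) (r N w' i)"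
            unfolding stepB[OF w' k iNS False[symmetric]] stepB[OF w' iNS k False]
            by (rule symB[OF w' k iNS False[symmetric]])
          then have "real (card N - 1) / (real (card N - 1) - ?s) = 0 \<or> X p S (N - {k}) (r N w' k) = X p S (N - {i}) (r N w' i)"
            by (simp only: mult_cancel_left)
          then show ?thesis using cpos[OF iNS k False[symmetric]] by blast
        qed simp
        have C: "(?n - ?s) * X p S (N - {i}) (r N w' i) = ?n * X p S N w'" if w': "tux_game N w'" for w'
        proof -
          have "?n * X p S N w' = (\<Sum>k\<in>N - S. X p S (N - {i}) (r N w' i))"
            unfolding sumA[OF w', symmetric] by (rule sum.cong[OF refl]) (rule eqB[OF w'])
          also have "\<dots> = (?n - ?s) * X p S (N - {i}) (r N w' i)" using cardNS by simp
          finally show ?thesis by simp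
        qed
        let ?M = "N - {i} - S"
        have finM: "finite ?M" using finN by simp
        define E where "E = (\<lambda>B. add_to i B \<sigma>0) ` insert {} \<sigma>0"
        define w' where "w' = (\<lambda>T \<rho>. if T = S \<and> \<rho> \<in> E then w T \<rho> else 0)"
        have tw': "tux_game N w'" using False unfolding w'_def tux_game_def by simp
        let ?q = "p (N - {i}) (insert S \<sigma>0)"
        have "partition_on (N - {i}) (insert S \<sigma>0)" using L2[OF False SNi P0] .
        then have q: "?q > 0" using pos NU unfolding positive_rp_def by blast
        have X1: "X p S (N - {i}) (r N w' i) = ?q * r N w i S \<sigma>0"
        proof -
          have "X p S (N - {i}) (r N w' i) = (\<Sum>\<sigma>\<in>{\<sigma>. partition_on ?M \<sigma>}. if \<sigma> = \<sigma>0 then ?q * r N w' i S \<sigma>0 else 0)"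
            unfolding X_def
          proof (rule sum.cong[OF refl])
            fix \<sigma> assume "\<sigma> \<in> {\<sigma>. partition_on ?M \<sigma>}"
            then have Ps: "partition_on ?M \<sigma>" by simp
            show "p (N - {i}) (insert S \<sigma>) * r N w' i S \<sigma> = (if \<sigma> = \<sigma>0 then ?q * r N w' i S \<sigma>0 else 0)"
            proof (cases "\<sigma> = \<sigma>0")
              case False
              have em: "emb (N - {i}) S \<sigma>" using Ps SNi by (simp add: emb_def)
              have "r N w' i S \<sigma> = 0"
              proof (rule R_zero[OF R NL NU tw' i em])
                fix B assume B: "B \<in> insert {} \<sigma>"
                have "add_to i B \<sigma> \<notin> E"
                proof
                  assume "add_to i B \<sigma> \<in> E"
                  then obtain B0 where B0: "B0 \<in> insert {} \<sigma>0" "add_to i B \<sigma> = add_to i B0 \<sigma>0"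
                    unfolding E_def by blast
                  from L5[OF Ps P0 iM B B0(1) B0(2)] False show False by simp
                qed
                then show "w' S (add_to i B \<sigma>) = 0" unfolding w'_def by simp
              qed
              then show ?thesis using False by simp
            qed simp
          qed
          also have "\<dots> = ?q * r N w' i S \<sigma>0" using P0 finitely_many_partition_on[OF finM] by simp
          also have "r N w' i S \<sigma>0 = r N w i S \<sigma>0"
            by (rule R_loc[OF R NU tw' w i e]) (auto simp: w'_def E_def)
          finally show ?thesis .
        qed
        let ?g = "\<lambda>\<rho>. p N (insert S \<rho>) * w S \<rho>"
        have X2: "X p S N w' = (\<Sum>B\<in>insert {} \<sigma>0. ?g (add_to i B \<sigma>0))"
        proof -
          have finP: "finite {\<rho>. partition_on (N - S) \<rho>}" using finN by (simp add: finitely_many_partition_on)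
          have "X p S N w' = (\<Sum>\<rho>\<in>{\<rho>. partition_on (N - S) \<rho>}. if \<rho> \<in> E then ?g \<rho> else 0)"
            unfolding X_def w'_def by (rule sum.cong) auto
          also have "\<dots> = (\<Sum>\<rho>\<in>{\<rho>. partition_on (N - S) \<rho>} \<inter> E. ?g \<rho>)"
            by (rule sum.inter_restrict[OF finP, symmetric])
          also have "{\<rho>. partition_on (N - S) \<rho>} \<inter> E = E"
          proof -
            have "insert i ?M = N - S" using i iS SN by blast
            then have "E \<subseteq> {\<rho>. partition_on (N - S) \<rho>}" unfolding E_def using L3[OF P0 iM] by auto
            then show ?thesis by blast
          qed
          also have "(\<Sum>\<rho>\<in>E. ?g \<rho>) = (\<Sum>B\<in>insert {} \<sigma>0. ?g (add_to i B \<sigma>0))"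
            unfolding E_def
          proof (rule sum.reindex[unfolded comp_def])
            show "inj_on (\<lambda>B. add_to i B \<sigma>0) (insert {} \<sigma>0)"
            proof (rule inj_onI)
              fix B1 B2 assume "B1 \<in> insert {} \<sigma>0" "B2 \<in> insert {} \<sigma>0" "add_to i B1 \<sigma>0 = add_to i B2 \<sigma>0"
              from L5[OF P0 P0 iM this] show "B1 = B2" by simp
            qed
          qed
          finally show ?thesis .
        qed
        have main: "(?n - ?s) * (?q * r N w i S \<sigma>0) = ?n * (\<Sum>B\<in>insert {} \<sigma>0. ?g (add_to i B \<sigma>0))"
          using C[OF tw'] X1 X2 by simp
        have "rp p N w i S \<sigma>0 = ?n / (?n - ?s) * ((\<Sum>B\<in>insert {} \<sigma>0. ?g (add_to i B \<sigma>0)) / ?q)"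
        proof -
          have "(\<Sum>B\<in>insert {} \<sigma>0. p N (insert S (add_to i B \<sigma>0)) / ?q * w S (add_to i B \<sigma>0))
              = (\<Sum>B\<in>insert {} \<sigma>0. ?g (add_to i B \<sigma>0) / ?q)" by (simp add: field_simps)
          also have "\<dots> = (\<Sum>B\<in>insert {} \<sigma>0. ?g (add_to i B \<sigma>0)) / ?q" by (rule sum_divide_distrib[symmetric])
          finally show ?thesis unfolding rp_def by simp
        qed
        also have "\<dots> = r N w i S \<sigma>0"
        proof -
          have ns: "?n - ?s > 0" using sn by simp
          show ?thesis using main ns q by (simp add: field_simps)
        qed
        finally show ?thesis by simp
      qed
    qed
  qed
qed


theorem theorem4:
  fixes U :: "'a set" and p :: "'a set \<Rightarrow> 'a set set \<Rightarrow> real" and r :: "'a restr_op"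
  assumes "finite U"
    and "random_partition U p"
    and "positive_rp U p"
    and "\<forall>N v. N \<subseteq> U \<longrightarrow> tu_game N v \<longrightarrow> Ep p N (\<lambda>S \<pi>. v S) = Pot N v"
    and "restriction_operator U r"
  shows "(path_independent U r \<and> preserves_null U r \<and>
          (\<forall>N w. N \<subseteq> U \<longrightarrow> tux_game N w \<longrightarrow> potr r N w = Ep p N w))
     \<longleftrightarrow> (\<forall>N w i S \<pi>. N \<subseteq> U \<longrightarrow> tux_game N w \<longrightarrow> i \<in> N \<longrightarrow> emb (N - {i}) S \<pi> \<longrightarrow>
            r N w i S \<pi> = rp p N w i S \<pi>)"
proof
  assume L: "path_independent U r \<and> preserves_null U r \<and>
          (\<forall>N w. N \<subseteq> U \<longrightarrow> tux_game N w \<longrightarrow> potr r N w = Ep p N w)"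
  show "\<forall>N w i S \<pi>. N \<subseteq> U \<longrightarrow> tux_game N w \<longrightarrow> i \<in> N \<longrightarrow> emb (N - {i}) S \<pi> \<longrightarrow>
            r N w i S \<pi> = rp p N w i S \<pi>"
  proof (intro allI impI)
    fix N w i S \<pi>
    assume a: "N \<subseteq> U" "tux_game N w" "i \<in> N" "emb (N - {i}) S \<pi>"
    have "\<forall>w i S \<sigma>. tux_game N w \<longrightarrow> i \<in> N \<longrightarrow> emb (N - {i}) S \<sigma> \<longrightarrow> r N w i S \<sigma> = rp p N w i S \<sigma>"
      using L by (intro forward[OF assms(1,3,5) _ _ _ a(1)]) auto
    then show "r N w i S \<pi> = rp p N w i S \<pi>" using a by blast
  qed
next
  assume EQ: "\<forall>N w i S \<pi>. N \<subseteq> U \<longrightarrow> tux_game N w \<longrightarrow> i \<in> N \<longrightarrow> emb (N - {i}) S \<pi> \<longrightarrow>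
            r N w i S \<pi> = rp p N w i S \<pi>"
  have 1: "path_independent U r" by (rule back_PI[OF assms(1,3,5) EQ])
  have 2: "preserves_null U r" by (rule back_null[OF EQ])
  have 3: "\<forall>N w. N \<subseteq> U \<longrightarrow> tux_game N w \<longrightarrow> potr r N w = Ep p N w"
    using back_potr[OF assms(1,3,4,5) EQ] by blast
  show "path_independent U r \<and> preserves_null U r \<and>
          (\<forall>N w. N \<subseteq> U \<longrightarrow> tux_game N w \<longrightarrow> potr r N w = Ep p N w)" using 1 2 3 by blast
qed

end
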